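(* For any positive contraction $p$ in an operator system $\mathcal V$ we have $\begin{pmatrix} p & p \\ p & p \end{pmatrix} + J_{p \oplus q} = \begin{pmatrix} p & 0 \\ 0 & 0 \end{pmatrix} + J_{p \oplus q}$ and $\begin{pmatrix} q & q \\ q & q \end{pmatrix} + J_{p \oplus q} = \begin{pmatrix} 0 & 0 \\ 0 & q \end{pmatrix} + J_{p \oplus q}$, where $q = e - p$. Consequently the map $\pi_p$ is unital.
   Context: Let $(\mathcal V, \{C_n\}_n, e)$ be an operator system and $0 \leq p \leq e$, $q = e-p$. Define $C(p \oplus q) = \{ x \in M_2(\mathcal V) : x = x^*, \ \forall \epsilon > 0 \ \exists t > 0 \text{ such that } x + \epsilon (p \oplus q) + t (q \oplus p) \in C_2\}$ and $J_{p \oplus q} = \operatorname{span}\big(C(p\oplus q) \cap -C(p \oplus q)\big)$. The map $\pi_p: \mathcal V \to M_2(\mathcal V)/J_{p\oplus q}$ is $\pi_p(x) = \begin{pmatrix} x & x \\ x & x \end{pmatrix} + J_{p \oplus q}$, and the unit of $M_2(\mathcal V)/J_{p\oplus q}$ is $(p \oplus q) + J_{p\oplus q}$. *)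

theory Defs
  imports Complex_Main
begin

text \<open>
  An n x n matrix over 'v is represented by a function
  nat => nat => 'v vanishing outside the index range {0..<n} x {0..<n}.
\<close>

type_synonym 'v mat = "nat \<Rightarrow> nat \<Rightarrow> 'v"

definition Mat :: "nat \<Rightarrow> 'v::zero mat set" where
  "Mat n = {x. \<forall>i j. (n \<le> i \<or> n \<le> j) \<longrightarrow> x i j = 0}"

definition madd :: "'v::plus mat \<Rightarrow> 'v mat \<Rightarrow> 'v mat" where
  "madd x y = (\<lambda>i j. x i j + y i j)"

definition msub :: "'v::minus mat \<Rightarrow> 'v mat \<Rightarrow> 'v mat" where
  "msub x y = (\<lambda>i j. x i j - y i j)"

definition mneg :: "'v::uminus mat \<Rightarrow> 'v mat" where
  "mneg x = (\<lambda>i j. - x i j)"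

definition msmul :: "(complex \<Rightarrow> 'v \<Rightarrow> 'v) \<Rightarrow> complex \<Rightarrow> 'v mat \<Rightarrow> 'v mat" where
  "msmul smul c x = (\<lambda>i j. smul c (x i j))"

definition madj :: "('v \<Rightarrow> 'v) \<Rightarrow> 'v mat \<Rightarrow> 'v mat" where
  "madj star x = (\<lambda>i j. star (x j i))"

definition mherm :: "('v \<Rightarrow> 'v) \<Rightarrow> 'v mat \<Rightarrow> bool" where
  "mherm star x \<longleftrightarrow> madj star x = x"

text \<open>a^* x a for a scalar m x n matrix a and x in M_m(V); result in M_n(V)\<close>
definition mconj :: "(complex \<Rightarrow> 'v::comm_monoid_add \<Rightarrow> 'v) \<Rightarrow> complex mat \<Rightarrow> nat \<Rightarrow> nat
    \<Rightarrow> 'v mat \<Rightarrow> 'v mat" where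
  "mconj smul a m n x = (\<lambda>i j. if i < n \<and> j < n
      then (\<Sum>k<m. \<Sum>l<m. smul (cnj (a k i) * a l j) (x k l)) else 0)"

definition mdiag :: "nat \<Rightarrow> 'v::zero \<Rightarrow> 'v mat" where
  "mdiag n v = (\<lambda>i j. if i = j \<and> i < n then v else 0)"

definition m1 :: "'v::zero \<Rightarrow> 'v mat" where
  "m1 v = (\<lambda>i j. if i = 0 \<and> j = 0 then v else 0)"

definition m2 :: "'v::zero \<Rightarrow> 'v \<Rightarrow> 'v \<Rightarrow> 'v \<Rightarrow> 'v mat" where
  "m2 a b c d = (\<lambda>i j. if i = 0 \<and> j = 0 then a else if i = 0 \<and> j = 1 then b
      else if i = 1 \<and> j = 0 then c else if i = 1 \<and> j = 1 then d else 0)"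

definition operator_system ::
  "(complex \<Rightarrow> 'v::ab_group_add \<Rightarrow> 'v) \<Rightarrow> ('v \<Rightarrow> 'v) \<Rightarrow> (nat \<Rightarrow> 'v mat set) \<Rightarrow> 'v \<Rightarrow> bool" where
  "operator_system smul star C e \<longleftrightarrow>
     Vector_Spaces.vector_space smul \<and>
     (\<forall>x y. star (x + y) = star x + star y) \<and>
     (\<forall>c x. star (smul c x) = smul (cnj c) (star x)) \<and>
     (\<forall>x. star (star x) = x) \<and>
     (\<forall>n. C n \<subseteq> {x \<in> Mat n. mherm star x}) \<and>
     (\<forall>n x y. x \<in> C n \<longrightarrow> y \<in> C n \<longrightarrow> madd x y \<in> C n) \<and>
     (\<forall>n (r::real) x. 0 \<le> r \<longrightarrow> x \<in> C n \<longrightarrow> msmul smul (complex_of_real r) x \<in> C n) \<and>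
     (\<forall>m n a x. x \<in> C m \<longrightarrow> mconj smul a m n x \<in> C n) \<and>
     (\<forall>n. C n \<inter> mneg ` C n = {\<lambda>i j. 0}) \<and>
     star e = e \<and>
     (\<forall>n x. x \<in> Mat n \<longrightarrow> mherm star x \<longrightarrow>
        (\<exists>r::real. r > 0 \<and> madd (msmul smul (complex_of_real r) (mdiag n e)) x \<in> C n)) \<and>
     (\<forall>n x. x \<in> Mat n \<longrightarrow> mherm star x \<longrightarrow>
        (\<forall>\<epsilon>::real. \<epsilon> > 0 \<longrightarrow> madd (msmul smul (complex_of_real \<epsilon>) (mdiag n e)) x \<in> C n)
        \<longrightarrow> x \<in> C n)"

text \<open>C(p \<oplus> q) for p \<oplus> q = m2 p 0 0 q\<close>
definition Cpq :: "(complex \<Rightarrow> 'v::ab_group_add \<Rightarrow> 'v) \<Rightarrow> ('v \<Rightarrow> 'v) \<Rightarrow> (nat \<Rightarrow> 'v mat set)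
    \<Rightarrow> 'v \<Rightarrow> 'v \<Rightarrow> 'v mat set" where
  "Cpq smul star C p q = {x \<in> Mat 2. mherm star x \<and>
     (\<forall>\<epsilon>::real. \<epsilon> > 0 \<longrightarrow> (\<exists>t::real. t > 0 \<and>
        madd (madd x (msmul smul (complex_of_real \<epsilon>) (m2 p 0 0 q)))
             (msmul smul (complex_of_real t) (m2 q 0 0 p)) \<in> C 2))}"

definition mspan :: "(complex \<Rightarrow> 'v::comm_monoid_add \<Rightarrow> 'v) \<Rightarrow> 'v mat set \<Rightarrow> 'v mat set" where
  "mspan smul S = {x. \<exists>(k::nat) (c::nat \<Rightarrow> complex) y. (\<forall>i<k. y i \<in> S) \<and>
      x = (\<lambda>a b. \<Sum>i<k. smul (c i) (y i a b))}"

definition Jpq :: "(complex \<Rightarrow> 'v::ab_group_add \<Rightarrow> 'v) \<Rightarrow> ('v \<Rightarrow> 'v) \<Rightarrow> (nat \<Rightarrow> 'v mat set)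
    \<Rightarrow> 'v \<Rightarrow> 'v \<Rightarrow> 'v mat set" where
  "Jpq smul star C p q = mspan smul (Cpq smul star C p q \<inter> mneg ` Cpq smul star C p q)"

definition coset :: "'v::plus mat \<Rightarrow> 'v mat set \<Rightarrow> 'v mat set" where
  "coset x J = {madd x y | y. y \<in> J}"

definition pi_p :: "(complex \<Rightarrow> 'v::ab_group_add \<Rightarrow> 'v) \<Rightarrow> ('v \<Rightarrow> 'v) \<Rightarrow> (nat \<Rightarrow> 'v mat set)
    \<Rightarrow> 'v \<Rightarrow> 'v \<Rightarrow> 'v \<Rightarrow> 'v mat set" where
  "pi_p smul star C e p x = coset (m2 x x x x) (Jpq smul star C p (e - p))"

end

theory Submission
  imports Defs
begin

lemma m2_ext: "m2 a b c d = m2 a' b' c' d' \<longleftrightarrow> a = a' \<and> b = b' \<and> c = c' \<and> d = d'"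
  unfolding m2_def by (auto simp: fun_eq_iff)

lemma madd_m2: "madd (m2 a b c d) (m2 a' b' c' d') = m2 (a+a') (b+b') (c+c') (d+(d'::'v::monoid_add))"
  unfolding madd_def m2_def by (auto simp: fun_eq_iff)

lemma mneg_m2: "mneg (m2 a b c d) = m2 (-a) (-b) (-c) (-(d::'v::group_add))"
  unfolding mneg_def m2_def by (auto simp: fun_eq_iff)

lemma msub_m2: "msub (m2 a b c d) (m2 a' b' c' d') = m2 (a-a') (b-b') (c-c') (d-(d'::'v::group_add))"
  unfolding msub_def m2_def by (auto simp: fun_eq_iff)

lemma m2_Mat: "m2 a b c d \<in> Mat 2"
  unfolding m2_def Mat_def by auto

lemma os_fields: assumes "operator_system smul star C e"
  shows "Vector_Spaces.vector_space smul"
    "\<forall>x y. star (x + y) = star x + star y"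
    "\<forall>n. C n \<subseteq> {x \<in> Mat n. mherm star x}"
    "\<forall>n x y. x \<in> C n \<longrightarrow> y \<in> C n \<longrightarrow> madd x y \<in> C n"
    "\<forall>m n a x. x \<in> C m \<longrightarrow> mconj smul a m n x \<in> C n"
  using assms unfolding operator_system_def by auto

lemma os_vs: "operator_system smul star C e \<Longrightarrow> Vector_Spaces.vector_space smul"
  using os_fields(1) .

lemma msmul_m2: assumes os: "operator_system smul star C e"
  shows "msmul smul c (m2 a b x d) = m2 (smul c a) (smul c b) (smul c x) (smul c d)"
proof -
  interpret vs: vector_space smul using os_vs[OF os] .
  show ?thesis unfolding msmul_def m2_def by (auto simp: fun_eq_iff)
qed

lemma star_facts: assumes os: "operator_system smul star C e"
  shows "star 0 = 0" "star (- x) = - star x"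
proof -
  have add: "\<And>x y. star (x + y) = star x + star y" using os_fields(2)[OF os] by blast
  interpret additive star by standard (rule add)
  show "star 0 = 0" by (rule zero)
  show "star (- x) = - star x" by (rule minus)
qed

lemma mherm_m2: assumes os: "operator_system smul star C e"
  shows "mherm star (m2 a b c d) \<longleftrightarrow> star a = a \<and> star c = b \<and> star b = c \<and> star d = d"
proof -
  have "madj star (m2 a b c d) = m2 (star a) (star c) (star b) (star d)"
    unfolding madj_def m2_def using star_facts[OF os] by (auto simp: fun_eq_iff)
  then show ?thesis unfolding mherm_def by (simp add: m2_ext)
qed

lemma herm1: assumes os: "operator_system smul star C e" and "m1 u \<in> C 1"
  shows "star u = u"
proof -
  have "mherm star (m1 u)" using os_fields(3)[OF os] assms(2) by blast
  then have "madj star (m1 u) 0 0 = m1 u 0 0" unfolding mherm_def by simp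
  then show ?thesis unfolding madj_def m1_def by simp
qed

lemma rank1: assumes os: "operator_system smul star C e" and u: "m1 u \<in> C 1"
  shows "m2 (smul (of_real (a0*a0)) u) (smul (of_real (a0*a1)) u) (smul (of_real (a0*a1)) u)
            (smul (of_real (a1*a1)) u) \<in> C 2"
proof -
  define a :: "complex mat" where "a = (\<lambda>k i. if i = 0 then of_real a0 else if i = 1 then of_real a1 else 0)"
  have "mconj smul a 1 2 (m1 u) \<in> C 2" using os_fields(5)[OF os] u by blast
  moreover have "mconj smul a 1 2 (m1 u) = m2 (smul (of_real (a0*a0)) u) (smul (of_real (a0*a1)) u) (smul (of_real (a0*a1)) u)
            (smul (of_real (a1*a1)) u)"
    unfolding mconj_def m2_def m1_def a_def
    by (auto simp: fun_eq_iff less_2_cases_iff mult.commute)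
  ultimately show ?thesis by simp
qed

lemma C_add: assumes os: "operator_system smul star C e" and "x \<in> C n" "y \<in> C n"
  shows "madd x y \<in> C n" using os_fields(4)[OF os] assms(2,3) by blast


lemma rank1': assumes os: "operator_system smul star C e" and u: "m1 u \<in> C 1"
  and "a0*a0 = A" "a0*a1 = B" "a1*a1 = D"
  shows "m2 (smul (of_real A) u) (smul (of_real B) u) (smul (of_real B) u) (smul (of_real D) u) \<in> C 2"
  using rank1[OF os u, of a0 a1] assms(3-5) by simp

lemma diag1: assumes os: "operator_system smul star C e" and u: "m1 u \<in> C 1" and r: "r \<ge> 0"
  shows "m2 (smul (of_real r) u) 0 0 0 \<in> C 2" "m2 0 0 0 (smul (of_real r) u) \<in> C 2"
proof -
  interpret vs: vector_space smul using os_vs[OF os] .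
  show "m2 (smul (of_real r) u) 0 0 0 \<in> C 2"
    using rank1'[OF os u, of "sqrt r" r 0 0 0] r by simp
  show "m2 0 0 0 (smul (of_real r) u) \<in> C 2"
    using rank1'[OF os u, of 0 0 "sqrt r" 0 r] r by simp
qed

lemma C_add4: assumes os: "operator_system smul star C e"
  and "m2 a1 b1 c1 d1 \<in> C 2" "m2 a2 b2 c2 d2 \<in> C 2" "m2 a3 b3 c3 d3 \<in> C 2" "m2 a4 b4 c4 d4 \<in> C 2"
  and "a = a1 + a2 + a3 + a4" "b = b1 + b2 + b3 + b4" "c = c1 + c2 + c3 + c4" "d = d1 + d2 + d3 + d4"
  shows "m2 a b c d \<in> C 2"
proof -
  have "madd (madd (madd (m2 a1 b1 c1 d1) (m2 a2 b2 c2 d2)) (m2 a3 b3 c3 d3)) (m2 a4 b4 c4 d4) \<in> C 2"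
    using assms(2-5) by (intro C_add[OF os]) 
  then show ?thesis using assms(6-9) by (simp add: madd_m2)
qed

lemma keyA: assumes os: "operator_system smul star C e" and p: "m1 p \<in> C 1" and q: "m1 q \<in> C 1"
  and s: "s = 1 \<or> s = -1" and sp: "sp = smul (of_real s) p" and eps: "\<epsilon> > 0"
  shows "madd (madd (m2 0 sp sp sp) (msmul smul (of_real \<epsilon>) (m2 p 0 0 q)))
           (msmul smul (of_real (1 + 1/\<epsilon>)) (m2 q 0 0 p)) \<in> C 2"
proof -
  interpret vs: vector_space smul using os_vs[OF os] .
  define t where "t = 1 + 1/\<epsilon>"
  have ss: "s * s = 1" using s by auto
  have f1: "m2 (smul (of_real \<epsilon>) p) (smul (of_real s) p) (smul (of_real s) p) (smul (of_real (1/\<epsilon>)) p) \<in> C 2"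
    apply (rule rank1'[OF os p, of "sqrt \<epsilon>" _ "s / sqrt \<epsilon>"])
    using eps ss by (auto simp: field_simps)
  have f2: "m2 0 0 0 (smul (of_real (s+1)) p) \<in> C 2" by (rule diag1[OF os p]) (use s in auto)
  have f3: "m2 (smul (of_real t) q) 0 0 0 \<in> C 2" by (rule diag1[OF os q]) (use eps in \<open>auto simp: t_def\<close>)
  have f4: "m2 0 0 0 (smul (of_real \<epsilon>) q) \<in> C 2" by (rule diag1[OF os q]) (use eps in auto)
  have "m2 (smul (of_real \<epsilon>) p + smul (of_real t) q) sp sp (sp + smul (of_real \<epsilon>) q + smul (of_real t) p) \<in> C 2"
  proof (rule C_add4[OF os f1 f2 f3 f4])
    have "smul (of_real (1/\<epsilon>)) p + smul (of_real (s+1)) p = smul (of_real (1/\<epsilon> + (s+1))) p"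
      by (simp add: vs.scale_left_distrib[symmetric])
    also have "\<dots> = smul (of_real s + of_real t) p"
      by (simp add: t_def)
    also have "\<dots> = smul (of_real s) p + smul (of_real t) p"
      by (rule vs.scale_left_distrib)
    finally show "sp + smul (of_real \<epsilon>) q + smul (of_real t) p = smul (of_real (1/\<epsilon>)) p + smul (of_real (s+1)) p + 0 + smul (of_real \<epsilon>) q"
      using sp by (simp add: algebra_simps)
  qed (auto simp: sp)
  then show ?thesis by (simp add: msmul_m2[OF os] madd_m2 t_def)
qed

lemma keyB: assumes os: "operator_system smul star C e" and p: "m1 p \<in> C 1" and q: "m1 q \<in> C 1"
  and s: "s = 1 \<or> s = -1" and sq: "sq = smul (of_real s) q" and eps: "\<epsilon> > 0"
  shows "madd (madd (m2 sq sq sq 0) (msmul smul (of_real \<epsilon>) (m2 p 0 0 q)))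
           (msmul smul (of_real (1 + 1/\<epsilon>)) (m2 q 0 0 p)) \<in> C 2"
proof -
  interpret vs: vector_space smul using os_vs[OF os] .
  define t where "t = 1 + 1/\<epsilon>"
  have ss: "s * s = 1" using s by auto
  have f1: "m2 (smul (of_real (1/\<epsilon>)) q) (smul (of_real s) q) (smul (of_real s) q) (smul (of_real \<epsilon>) q) \<in> C 2"
    apply (rule rank1'[OF os q, of "s / sqrt \<epsilon>" _ "sqrt \<epsilon>"])
    using eps ss by (auto simp: field_simps)
  have f2: "m2 (smul (of_real (s+1)) q) 0 0 0 \<in> C 2" by (rule diag1[OF os q]) (use s in auto)
  have f3: "m2 (smul (of_real \<epsilon>) p) 0 0 0 \<in> C 2" by (rule diag1[OF os p]) (use eps in auto)
  have f4: "m2 0 0 0 (smul (of_real t) p) \<in> C 2" by (rule diag1[OF os p]) (use eps in \<open>auto simp: t_def\<close>)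
  have "m2 (sq + smul (of_real \<epsilon>) p + smul (of_real t) q) sq sq (smul (of_real \<epsilon>) q + smul (of_real t) p) \<in> C 2"
  proof (rule C_add4[OF os f1 f2 f3 f4])
    have "smul (of_real (1/\<epsilon>)) q + smul (of_real (s+1)) q = smul (of_real (1/\<epsilon> + (s+1))) q"
      by (simp add: vs.scale_left_distrib[symmetric])
    also have "\<dots> = smul (of_real s + of_real t) q"
      by (simp add: t_def)
    also have "\<dots> = smul (of_real s) q + smul (of_real t) q"
      by (rule vs.scale_left_distrib)
    finally show "sq + smul (of_real \<epsilon>) p + smul (of_real t) q = smul (of_real (1/\<epsilon>)) q + smul (of_real (s+1)) q + smul (of_real \<epsilon>) p + 0"
      using sq by (simp add: algebra_simps)
  qed (auto simp: sq)
  then show ?thesis by (simp add: msmul_m2[OF os] madd_m2 t_def)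
qed


lemma mneg_mneg: "mneg (mneg x) = (x :: 'v::group_add mat)"
  unfolding mneg_def by simp

lemma in_Cpq: assumes os: "operator_system smul star C e" and p: "m1 p \<in> C 1" and q: "m1 q \<in> C 1"
  and h: "mherm star x" and x: "x = m2 a b c d"
  and k: "\<And>\<epsilon>. \<epsilon> > 0 \<Longrightarrow> madd (madd x (msmul smul (of_real \<epsilon>) (m2 p 0 0 q)))
           (msmul smul (of_real (1 + 1/\<epsilon>)) (m2 q 0 0 p)) \<in> C 2"
  shows "x \<in> Cpq smul star C p q"
  unfolding Cpq_def
proof (intro CollectI conjI allI impI)
  show "x \<in> Mat 2" using x m2_Mat by simp
  show "mherm star x" by (rule h)
  fix \<epsilon> :: real assume "\<epsilon> > 0"
  then show "\<exists>t>0. madd (madd x (msmul smul (complex_of_real \<epsilon>) (m2 p 0 0 q))) (msmul smul (complex_of_real t) (m2 q 0 0 p)) \<in> C 2"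
    using k[of \<epsilon>] by (intro exI[of _ "1 + 1/\<epsilon>"]) (auto intro: add_pos_pos)
qed

lemma in_span1: assumes os: "operator_system smul star C e" and "x \<in> S"
  shows "x \<in> mspan smul S"
proof -
  interpret vs: vector_space smul using os_vs[OF os] .
  show ?thesis unfolding mspan_def
    by (rule CollectI, rule exI[of _ 1], rule exI[of _ "\<lambda>_. 1"], rule exI[of _ "\<lambda>_. x"]) (use assms(2) in auto)
qed

lemma span_add: assumes "x \<in> mspan smul S" "y \<in> mspan smul S"
  shows "madd x y \<in> mspan smul S"
proof -
  obtain k1 c1 y1 where 1: "\<forall>i<(k1::nat). y1 i \<in> S" "x = (\<lambda>a b. \<Sum>i<k1. smul (c1 i) (y1 i a b))"
    using assms(1) unfolding mspan_def mem_Collect_eq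
    apply (elim exE conjE) apply (rule that) apply assumption apply assumption done
  obtain k2 c2 y2 where 2: "\<forall>i<(k2::nat). y2 i \<in> S" "y = (\<lambda>a b. \<Sum>i<k2. smul (c2 i) (y2 i a b))"
    using assms(2) unfolding mspan_def mem_Collect_eq
    apply (elim exE conjE) apply (rule that) apply assumption apply assumption done
  define c where "c = (\<lambda>i. if i < k1 then c1 i else c2 (i - k1))"
  define z where "z = (\<lambda>i. if i < k1 then y1 i else y2 (i - k1))"
  have sumeq: "(\<Sum>i<k1+n. f i) = (\<Sum>i<k1. f i) + (\<Sum>i<n. f (k1+i))" for n and f :: "nat \<Rightarrow> 'b::comm_monoid_add"
    by (induction n) (auto simp: add.assoc)
  have "madd x y = (\<lambda>a b. \<Sum>i<k1+k2. smul (c i) (z i a b))"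
    unfolding madd_def 1 2 sumeq c_def z_def by (simp add: fun_eq_iff)
  moreover have "\<forall>i<k1+k2. z i \<in> S" using 1 2 by (auto simp: z_def)
  ultimately show ?thesis unfolding mspan_def by auto
qed

lemma span_neg: assumes os: "operator_system smul star C e" and "x \<in> mspan smul S"
  shows "mneg x \<in> mspan smul S"
proof -
  interpret vs: vector_space smul using os_vs[OF os] .
  obtain k1 c1 y1 where 1: "\<forall>i<(k1::nat). y1 i \<in> S" "x = (\<lambda>a b. \<Sum>i<k1. smul (c1 i) (y1 i a b))"
    using assms(2) unfolding mspan_def mem_Collect_eq
    apply (elim exE conjE) apply (rule that) apply assumption apply assumption done
  have "mneg x = (\<lambda>a b. \<Sum>i<k1. smul (- c1 i) (y1 i a b))"
    unfolding mneg_def 1 by (simp add: fun_eq_iff sum_negf)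
  then show ?thesis using 1(1) unfolding mspan_def mem_Collect_eq by (intro exI[of _ k1] exI[of _ "\<lambda>i. - c1 i"] exI[of _ y1] conjI)
qed

lemma coset_eq: assumes os: "operator_system smul star C e" and d: "msub x y \<in> mspan smul S"
  shows "coset x (mspan smul S) = coset y (mspan smul S)"
proof -
  have d2: "msub y x \<in> mspan smul S"
  proof -
    have "msub y x = mneg (msub x y)" unfolding msub_def mneg_def by (simp add: fun_eq_iff)
    then show ?thesis using span_neg[OF os d] by simp
  qed
  have A: "coset a (mspan smul S) \<subseteq> coset b (mspan smul S)" if "msub a b \<in> mspan smul S" for a b
  proof
    fix z assume "z \<in> coset a (mspan smul S)"
    then obtain j where j: "j \<in> mspan smul S" "z = madd a j" unfolding coset_def by blast
    have "z = madd b (madd (msub a b) j)" using j(2) unfolding madd_def msub_def by (simp add: fun_eq_iff)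
    moreover have "madd (msub a b) j \<in> mspan smul S" by (rule span_add[OF that j(1)])
    ultimately show "z \<in> coset b (mspan smul S)" unfolding coset_def by blast
  qed
  show ?thesis using A[OF d] A[OF d2] by blast
qed

theorem lemma5p6:
  fixes smul :: "complex \<Rightarrow> 'v::ab_group_add \<Rightarrow> 'v"
    and star :: "'v \<Rightarrow> 'v" and C :: "nat \<Rightarrow> 'v mat set" and e p q :: 'v
  assumes os: "operator_system smul star C e"
    and p_pos: "m1 p \<in> C 1" and p_le_e: "m1 (e - p) \<in> C 1"
    and q_def: "q = e - p"
  shows "coset (m2 p p p p) (Jpq smul star C p q) = coset (m2 p 0 0 0) (Jpq smul star C p q)
       \<and> coset (m2 q q q q) (Jpq smul star C p q) = coset (m2 0 0 0 q) (Jpq smul star C p q)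
       \<and> pi_p smul star C e p e = coset (m2 p 0 0 q) (Jpq smul star C p q)"
proof -
  interpret vs: vector_space smul using os_vs[OF os] .
  have q: "m1 q \<in> C 1" using p_le_e q_def by simp
  have sp: "star p = p" by (rule herm1[OF os p_pos])
  have sq: "star q = q" by (rule herm1[OF os q])
  note sf = star_facts[OF os]
  define S where "S = Cpq smul star C p q \<inter> mneg ` Cpq smul star C p q"
  have J: "Jpq smul star C p q = mspan smul S" unfolding Jpq_def S_def ..
  have inS: "x \<in> mspan smul S" if "x \<in> Cpq smul star C p q" "mneg x \<in> Cpq smul star C p q" for x
  proof (rule in_span1[OF os])
    have "x = mneg (mneg x)" by (simp add: mneg_mneg)
    then show "x \<in> S" unfolding S_def using that by blast
  qed
  have A: "m2 0 p p p \<in> mspan smul S"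
  proof (rule inS)
    show "m2 0 p p p \<in> Cpq smul star C p q"
      by (rule in_Cpq[OF os p_pos q _ refl]) (use sp sf in \<open>simp add: mherm_m2[OF os]\<close>,
          rule keyA[OF os p_pos q, of 1], auto)
    show "mneg (m2 0 p p p) \<in> Cpq smul star C p q" unfolding mneg_m2 minus_zero
      by (rule in_Cpq[OF os p_pos q _ refl]) (use sp sf in \<open>simp add: mherm_m2[OF os]\<close>,
          rule keyA[OF os p_pos q, of "-1"], auto)
  qed
  have B: "m2 q q q 0 \<in> mspan smul S"
  proof (rule inS)
    show "m2 q q q 0 \<in> Cpq smul star C p q"
      by (rule in_Cpq[OF os p_pos q _ refl]) (use sq sf in \<open>simp add: mherm_m2[OF os]\<close>,
          rule keyB[OF os p_pos q, of 1], auto)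
    show "mneg (m2 q q q 0) \<in> Cpq smul star C p q" unfolding mneg_m2 minus_zero
      by (rule in_Cpq[OF os p_pos q _ refl]) (use sq sf in \<open>simp add: mherm_m2[OF os]\<close>,
          rule keyB[OF os p_pos q, of "-1"], auto)
  qed
  have g1: "coset (m2 p p p p) (mspan smul S) = coset (m2 p 0 0 0) (mspan smul S)"
    by (rule coset_eq[OF os]) (simp add: msub_m2 A)
  have g2: "coset (m2 q q q q) (mspan smul S) = coset (m2 0 0 0 q) (mspan smul S)"
    by (rule coset_eq[OF os]) (simp add: msub_m2 B)
  have "msub (m2 e e e e) (m2 p 0 0 q) = madd (m2 0 p p p) (m2 q q q 0)"
    by (simp add: msub_m2 madd_m2 q_def)
  then have g3: "coset (m2 e e e e) (mspan smul S) = coset (m2 p 0 0 q) (mspan smul S)"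
    using span_add[OF A B] by (intro coset_eq[OF os]) simp
  show ?thesis unfolding J pi_p_def q_def[symmetric] using g1 g2 g3 by simp
qed

end
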